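(* Let $(x_k)$ be a bounded sequence in a real Banach space $X$, let $x\in X$ and $c>0$, and suppose that $(x_k-x)$ generates an $\ell_1$-spreading model with constant $c$. Then $\widetilde{\operatorname{cca}}(x_{k^3})\ge 2c$, where $(x_{k^3})_{k\ge1}$ is the subsequence $x_1,x_8,x_{27},\dots$.
   Context: A bounded sequence $(y_k)$ generates an $\ell_1$-spreading model with constant $\delta>0$ if $\|\sum_{i\in F}\alpha_i y_i\|\ge\delta\sum_{i\in F}|\alpha_i|$ for every finite $F\subset\mathbb N$ with $\#F\le\min F$ and all real scalars $(\alpha_i)_{i\in F}$. $\operatorname{ca}(y_k)=\inf_{n}\sup\{\|y_k-y_l\|: k,l\ge n\}$, $\operatorname{cca}(y_k)=\operatorname{ca}(\frac1k\sum_{i=1}^k y_i)$, $\widetilde{\operatorname{cca}}(y_k)=\inf\{\operatorname{cca}(y_{k_n}) : (y_{k_n})\text{ a subsequence of }(y_k)\}$. *)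

theory Defs
  imports "HOL-Analysis.Analysis"
begin

text \<open>Sequences are functions nat => 'a; following the paper, indices start at 1
  and the value at index 0 is ignored by all definitions below.\<close>

definition ell1_spreading_model :: "(nat \<Rightarrow> 'a::real_normed_vector) \<Rightarrow> real \<Rightarrow> bool" where
  "ell1_spreading_model y \<delta> \<longleftrightarrow> \<delta> > 0 \<and> bounded (y ` {1..}) \<and>
     (\<forall>F \<alpha>. finite F \<and> F \<subseteq> {1..} \<and> F \<noteq> {} \<and> card F \<le> Min F \<longrightarrow>
        norm (\<Sum>i\<in>F. \<alpha> i *\<^sub>R y i) \<ge> \<delta> * (\<Sum>i\<in>F. \<bar>\<alpha> i\<bar>))"

definition ca :: "(nat \<Rightarrow> 'a::real_normed_vector) \<Rightarrow> real" where
  "ca y = (INF n\<in>{1..}. SUP kl\<in>{n..} \<times> {n..}. norm (y (fst kl) - y (snd kl)))"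

definition cca :: "(nat \<Rightarrow> 'a::real_normed_vector) \<Rightarrow> real" where
  "cca y = ca (\<lambda>k. (1 / real k) *\<^sub>R (\<Sum>i\<in>{1..k}. y i))"

text \<open>Subsequences (y_{k_n})_{n>=1} with 1 <= k_1 < k_2 < ... are exactly
  n |-> y (r n) for strict_mono r (the value r 0 is irrelevant).\<close>
definition cca_tilde :: "(nat \<Rightarrow> 'a::real_normed_vector) \<Rightarrow> real" where
  "cca_tilde y = (INF r\<in>{r::nat\<Rightarrow>nat. strict_mono r}. cca (y \<circ> r))"

end

theory Submission
  imports Defs
begin


lemma spread:
  fixes y :: "nat \<Rightarrow> 'a::real_normed_vector"
  assumes sp: "ell1_spreading_model y c" and r: "strict_mono r" and fin: "finite I" and ne: "I \<noteq> {}"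
    and ge: "\<forall>i\<in>I. p \<le> i" and p1: "1 \<le> p" and cardI: "card I \<le> p^3"
  shows "c * (\<Sum>i\<in>I. \<bar>\<beta> i\<bar>) \<le> norm (\<Sum>i\<in>I. \<beta> i *\<^sub>R y (r i ^ 3))"
proof -
  define g where "g = (\<lambda>i. r i ^ 3)"
  have inj: "inj_on g I"
  proof (rule inj_onI)
    fix a b assume "a \<in> I" "b \<in> I" "g a = g b"
    then have "r a = r b" unfolding g_def by (simp add: power_eq_iff_eq_base)
    then show "a = b" using r strict_mono_eq by blast
  qed
  define F where "F = g ` I"
  define \<alpha> where "\<alpha> = (\<lambda>j. \<beta> (inv_into I g j))"
  have finF: "finite F" "F \<noteq> {}" using fin ne by (auto simp: F_def)
  have rge: "\<And>i. i \<le> r i" using r by (simp add: seq_suble)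
  have gi: "\<And>i. i \<in> I \<Longrightarrow> p^3 \<le> g i"
  proof -
    fix i assume "i \<in> I"
    then have "p \<le> r i" using ge rge le_trans by blast
    then show "p^3 \<le> g i" unfolding g_def by (simp add: power_mono)
  qed
  have sub: "F \<subseteq> {1..}"
  proof
    fix j assume "j \<in> F"
    then obtain i where "i \<in> I" "j = g i" by (auto simp: F_def)
    then have "p^3 \<le> j" using gi by simp
    moreover have "1 \<le> p^3" using p1 by simp
    ultimately show "j \<in> {1..}" by simp
  qed
  have cardF: "card F = card I" using inj by (simp add: F_def card_image)
  have "Min F \<in> F" using finF by simp
  then obtain i where "i \<in> I" "Min F = g i" by (auto simp: F_def)
  then have "card F \<le> Min F" using gi cardF cardI by fastforce
  then have key: "c * (\<Sum>j\<in>F. \<bar>\<alpha> j\<bar>) \<le> norm (\<Sum>j\<in>F. \<alpha> j *\<^sub>R y j)"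
    using sp finF sub unfolding ell1_spreading_model_def by blast
  have e1: "(\<Sum>j\<in>F. \<bar>\<alpha> j\<bar>) = (\<Sum>i\<in>I. \<bar>\<beta> i\<bar>)"
    unfolding F_def using inj by (simp add: sum.reindex \<alpha>_def inv_into_f_f)
  have "(\<Sum>j\<in>F. \<alpha> j *\<^sub>R y j) = (\<Sum>i\<in>I. \<alpha> (g i) *\<^sub>R y (g i))"
    by (simp add: F_def sum.reindex[OF inj])
  also have "\<dots> = (\<Sum>i\<in>I. \<beta> i *\<^sub>R y (r i ^ 3))"
  proof (rule sum.cong)
    fix i assume "i \<in> I"
    then have "\<alpha> (g i) = \<beta> i" unfolding \<alpha>_def using inv_into_f_f[OF inj] by simp
    then show "\<alpha> (g i) *\<^sub>R y (g i) = \<beta> i *\<^sub>R y (r i ^ 3)" by (simp add: g_def)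
  qed simp
  finally have e2: "(\<Sum>j\<in>F. \<alpha> j *\<^sub>R y j) = (\<Sum>i\<in>I. \<beta> i *\<^sub>R y (r i ^ 3))" .
  show ?thesis using key e1 e2 by simp
qed


lemma avgdiff:
  fixes z :: "nat \<Rightarrow> 'a::real_normed_vector"
  assumes k1: "1 \<le> k" and kl: "k \<le> l"
  shows "(1 / real k) *\<^sub>R (\<Sum>i\<in>{1..k}. z i) - (1 / real l) *\<^sub>R (\<Sum>i\<in>{1..l}. z i)
     = (\<Sum>i\<in>{1..l}. ((if i \<le> k then 1 / real k else 0) - 1 / real l) *\<^sub>R (z i - x0))"
proof -
  have l1: "1 \<le> l" using k1 kl by simp
  have s1: "(\<Sum>i\<in>{1..l}. (if i \<le> k then 1 / real k else 0) *\<^sub>R (z i - x0))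
       = (\<Sum>i\<in>{1..k}. (1 / real k) *\<^sub>R (z i - x0))"
  proof -
    have "(\<Sum>i\<in>{1..l}. (if i \<le> k then 1 / real k else 0) *\<^sub>R (z i - x0))
        = (\<Sum>i\<in>{1..l}. if i \<in> {..k} then (1 / real k) *\<^sub>R (z i - x0) else 0)"
      by (rule sum.cong) auto
    also have "\<dots> = (\<Sum>i\<in>{1..l} \<inter> {..k}. (1 / real k) *\<^sub>R (z i - x0))"
      by (rule sum.inter_restrict[symmetric]) simp
    also have "{1..l} \<inter> {..k} = {1..k}" using kl by auto
    finally show ?thesis .
  qed
  have a: "(1 / real k) *\<^sub>R (\<Sum>i\<in>{1..k}. (z i - x0)) = (1 / real k) *\<^sub>R (\<Sum>i\<in>{1..k}. z i) - x0"
    using k1 by (simp add: sum_subtractf scaleR_diff_right sum_constant_scaleR)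
  have b: "(1 / real l) *\<^sub>R (\<Sum>i\<in>{1..l}. (z i - x0)) = (1 / real l) *\<^sub>R (\<Sum>i\<in>{1..l}. z i) - x0"
    using l1 by (simp add: sum_subtractf scaleR_diff_right sum_constant_scaleR)
  have "(\<Sum>i\<in>{1..l}. ((if i \<le> k then 1 / real k else 0) - 1 / real l) *\<^sub>R (z i - x0))
     = (\<Sum>i\<in>{1..l}. (if i \<le> k then 1 / real k else 0) *\<^sub>R (z i - x0)) - (\<Sum>i\<in>{1..l}. (1 / real l) *\<^sub>R (z i - x0))"
    by (simp add: scaleR_diff_left sum_subtractf)
  also have "\<dots> = (1 / real k) *\<^sub>R (\<Sum>i\<in>{1..k}. (z i - x0)) - (1 / real l) *\<^sub>R (\<Sum>i\<in>{1..l}. (z i - x0))"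
    unfolding s1 by (simp add: scaleR_sum_right)
  finally show ?thesis using a b by simp
qed

lemma betasum:
  assumes k1: "1 \<le> k" and kl: "k \<le> l"
  shows "(\<Sum>i\<in>{1..l}. \<bar>(if i \<le> k then 1 / real k else 0) - 1 / real l\<bar>) = 2 - 2 * real k / real l"
proof -
  have "(\<Sum>i\<in>{1..l}. \<bar>(if i \<le> k then 1 / real k else 0) - 1 / real l\<bar>)
      = (\<Sum>i\<in>{1..l}. if i \<le> k then 1 / real k - 1 / real l else 1 / real l)"
  proof (rule sum.cong)
    fix i assume "i \<in> {1..l}"
    have "1 / real l \<le> 1 / real k" using k1 kl by (simp add: frac_le)
    then show "\<bar>(if i \<le> k then 1 / real k else 0) - 1 / real l\<bar> = (if i \<le> k then 1 / real k - 1 / real l else 1 / real l)"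
      by auto
  qed simp
  also have "\<dots> = (\<Sum>i\<in>{1..l} \<inter> {i. i \<le> k}. 1 / real k - 1 / real l) + (\<Sum>i\<in>{1..l} \<inter> - {i. i \<le> k}. 1 / real l)"
    by (rule sum.If_cases) simp
  also have "{1..l} \<inter> {i. i \<le> k} = {1..k}" using kl by auto
  also have "{1..l} \<inter> - {i. i \<le> k} = {k<..l}" by auto
  finally have "(\<Sum>i\<in>{1..l}. \<bar>(if i \<le> k then 1 / real k else 0) - 1 / real l\<bar>) = real k * (1 / real k - 1 / real l) + real (l - k) * (1 / real l)"
    by simp
  also have "\<dots> = 2 - 2 * real k / real l" using k1 kl by (simp add: field_simps of_nat_diff)
  finally show ?thesis .
qed


lemma mainbound:
  fixes y z :: "nat \<Rightarrow> 'a::real_normed_vector"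
  assumes sp: "ell1_spreading_model y c" and c0: "0 < c" and r: "strict_mono r"
    and My: "\<And>j. norm (y j) \<le> M" and p1: "1 \<le> p" and zy: "\<And>i. z i - x0 = y (r i ^ 3)"
  shows "2 * c - (3 * c + M) / real p \<le>
    norm ((1 / real (p^2)) *\<^sub>R (\<Sum>i\<in>{1..p^2}. z i) - (1 / real (p^3)) *\<^sub>R (\<Sum>i\<in>{1..p^3}. z i))"
proof -
  define k where "k = p^2"
  define l where "l = p^3"
  define \<beta> where "\<beta> = (\<lambda>i. (if i \<le> k then 1 / real k else 0) - 1 / real l)"
  have k1: "1 \<le> k" using p1 by (simp add: k_def)
  have kl: "k \<le> l" using p1 by (simp add: k_def l_def power_increasing)
  have pk: "p \<le> k" using p1 by (simp add: k_def power2_eq_square)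
  have pl: "p \<le> l" using pk kl by simp
  have M0: "0 \<le> M" using My[of 0] norm_ge_zero order_trans by blast
  have D: "(1 / real k) *\<^sub>R (\<Sum>i\<in>{1..k}. z i) - (1 / real l) *\<^sub>R (\<Sum>i\<in>{1..l}. z i)
     = (\<Sum>i\<in>{1..l}. \<beta> i *\<^sub>R y (r i ^ 3))"
    using avgdiff[OF k1 kl, of z x0] by (simp add: \<beta>_def zy)
  have split: "{1..l} = {1..<p} \<union> {p..l}" using pl p1 by auto
  have disj: "{1..<p} \<inter> {p..l} = {}" by auto
  define S1 where "S1 = (\<Sum>i\<in>{1..<p}. \<beta> i *\<^sub>R y (r i ^ 3))"
  define S2 where "S2 = (\<Sum>i\<in>{p..l}. \<beta> i *\<^sub>R y (r i ^ 3))"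
  define T1 where "T1 = (\<Sum>i\<in>{1..<p}. \<bar>\<beta> i\<bar>)"
  have DS: "(\<Sum>i\<in>{1..l}. \<beta> i *\<^sub>R y (r i ^ 3)) = S1 + S2"
    unfolding S1_def S2_def split by (rule sum.union_disjoint) (auto)
  have Tall: "(\<Sum>i\<in>{1..l}. \<bar>\<beta> i\<bar>) = T1 + (\<Sum>i\<in>{p..l}. \<bar>\<beta> i\<bar>)"
    unfolding T1_def split by (rule sum.union_disjoint) (auto)
  have bs: "(\<Sum>i\<in>{1..l}. \<bar>\<beta> i\<bar>) = 2 - 2 * real k / real l"
    using betasum[OF k1 kl] by (simp add: \<beta>_def)
  have kl_eq: "real k / real l = 1 / real p" using p1 by (simp add: k_def l_def field_simps power2_eq_square power3_eq_cube)
  have bi: "\<And>i. \<bar>\<beta> i\<bar> \<le> 1 / real k"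
  proof -
    fix i
    have "1 / real l \<le> 1 / real k" using k1 kl by (simp add: frac_le)
    moreover have "0 \<le> 1 / real l" by simp
    ultimately show "\<bar>\<beta> i\<bar> \<le> 1 / real k" unfolding \<beta>_def by auto
  qed
  have "T1 \<le> (\<Sum>i\<in>{1..<p}. 1 / real k)" unfolding T1_def by (rule sum_mono) (rule bi)
  also have "\<dots> = real (p - 1) / real k" by simp
  also have "\<dots> \<le> 1 / real p" using p1 by (simp add: k_def field_simps power2_eq_square)
  finally have T1b: "T1 \<le> 1 / real p" .
  have T10: "0 \<le> T1" unfolding T1_def by (rule sum_nonneg) simp
  have nS1: "norm S1 \<le> M * T1"
  proof -
    have "norm S1 \<le> (\<Sum>i\<in>{1..<p}. norm (\<beta> i *\<^sub>R y (r i ^ 3)))" unfolding S1_def by (rule norm_sum)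
    also have "\<dots> \<le> (\<Sum>i\<in>{1..<p}. M * \<bar>\<beta> i\<bar>)"
      by (rule sum_mono) (simp add: My mult_left_mono mult.commute[of M])
    also have "\<dots> = M * T1" by (simp add: T1_def sum_distrib_left)
    finally show ?thesis .
  qed
  have nS2: "c * (\<Sum>i\<in>{p..l}. \<bar>\<beta> i\<bar>) \<le> norm S2"
    unfolding S2_def
  proof (rule spread[OF sp r])
    show "finite {p..l}" by simp
    show "{p..l} \<noteq> {}" using pl by simp
    show "\<forall>i\<in>{p..l}. p \<le> i" by simp
    show "1 \<le> p" by (rule p1)
    have "card {p..l} = l + 1 - p" by simp
    also have "\<dots> \<le> p^3" using p1 by (simp add: l_def)
    finally show "card {p..l} \<le> p^3" .
  qed
  have "norm (S1 + S2) \<ge> norm S2 - norm S1" using norm_triangle_ineq4[of S2 "-S1"]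
    by (metis add.commute diff_le_eq norm_diff_ineq norm_minus_cancel)
  have eq2: "(\<Sum>i\<in>{p..l}. \<bar>\<beta> i\<bar>) = 2 - 2 / real p - T1" using Tall bs kl_eq by simp
  have "2 * c - (3 * c + M) / real p \<le> c * (2 - 2 / real p - T1) - M * T1"
  proof -
    have "(c + M) * T1 \<le> (c + M) * (1 / real p)" using T1b c0 M0 by (intro mult_left_mono) auto
    moreover have "(3 * c + M) / real p = (c + M) * (1 / real p) + 2 * c / real p"
      by (simp add: add_divide_distrib[symmetric])
    moreover have "c * (2 - 2 / real p - T1) - M * T1 = 2 * c - 2 * c / real p - (c + M) * T1"
      by (simp add: algebra_simps)
    ultimately show ?thesis by linarith
  qed
  also have "\<dots> \<le> norm S2 - norm S1" using nS1 nS2 eq2 by simp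
  also have "\<dots> \<le> norm (S1 + S2)" by fact
  finally show ?thesis using D DS by (simp add: k_def l_def)
qed


theorem lemma4p5:
  fixes x :: "nat \<Rightarrow> 'a::banach" and x0 :: 'a and c :: real
  assumes "bounded (range x)"
    and "c > 0"
    and "ell1_spreading_model (\<lambda>k. x k - x0) c"
  shows "cca_tilde (\<lambda>k. x (k ^ 3)) \<ge> 2 * c"
proof -
  define y where "y = (\<lambda>k. x k - x0)"
  have sp: "ell1_spreading_model y c" using assms(3) by (simp add: y_def)
  obtain B where B: "\<And>j. norm (x j) \<le> B" using assms(1) by (auto simp: bounded_iff)
  define M where "M = B + norm x0"
  have My: "norm (y j) \<le> M" for j unfolding y_def M_def
    using B[of j] norm_triangle_ineq4[of "x j" x0] by linarith
  have B0: "0 \<le> B" using B[of 0] norm_ge_zero order_trans by blast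
  have M0: "0 \<le> M" using B0 by (simp add: M_def)
  show ?thesis unfolding cca_tilde_def
  proof (rule cINF_greatest)
    show "{r::nat\<Rightarrow>nat. strict_mono r} \<noteq> {}" using strict_mono_id by blast
    fix r :: "nat \<Rightarrow> nat" assume "r \<in> {r. strict_mono r}"
    then have r: "strict_mono r" by simp
    define z where "z = (\<lambda>k. x (k ^ 3)) \<circ> r"
    define a where "a = (\<lambda>k. (1 / real k) *\<^sub>R (\<Sum>i\<in>{1..k}. z i))"
    have zy: "\<And>i. z i - x0 = y (r i ^ 3)" by (simp add: z_def y_def)
    have na: "\<And>k. norm (a k) \<le> B"
    proof -
      fix k
      have "norm (\<Sum>i\<in>{1..k}. z i) \<le> (\<Sum>i\<in>{1..k}. B)"
        by (rule order_trans[OF norm_sum]) (rule sum_mono, simp add: z_def B)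
      then have s: "norm (\<Sum>i\<in>{1..k}. z i) \<le> real k * B" by simp
      show "norm (a k) \<le> B"
      proof (cases "k = 0")
        case True then show ?thesis using B0 by (simp add: a_def)
      next
        case False
        then have "norm (a k) = norm (\<Sum>i\<in>{1..k}. z i) / real k" by (simp add: a_def)
        also have "\<dots> \<le> B" using s False by (simp add: divide_le_eq mult.commute)
        finally show ?thesis .
      qed
    qed
    show "2 * c \<le> cca ((\<lambda>k. x (k ^ 3)) \<circ> r)"
      unfolding cca_def ca_def z_def[symmetric] a_def[symmetric]
    proof (rule cINF_greatest)
      show "{1::nat..} \<noteq> {}" by auto
      fix n :: nat assume n: "n \<in> {1..}"
      define f where "f = (\<lambda>kl. norm (a (fst kl) - a (snd kl)))"
      have bdd: "bdd_above (f ` ({n..} \<times> {n..}))"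
      proof (rule bdd_aboveI2)
        fix kl
        have "norm (a (fst kl) - a (snd kl)) \<le> norm (a (fst kl)) + norm (a (snd kl))" by (rule norm_triangle_ineq4)
        then show "f kl \<le> 2 * B" using na[of "fst kl"] na[of "snd kl"] by (simp add: f_def)
      qed
      show "2 * c \<le> (SUP kl\<in>{n..} \<times> {n..}. norm (a (fst kl) - a (snd kl)))"
        unfolding f_def[symmetric]
      proof (rule field_le_epsilon)
        fix e :: real assume e: "0 < e"
        obtain q :: nat where q: "(3 * c + M) / e < real q" using reals_Archimedean2 by blast
        define p where "p = max q n"
        have p1: "1 \<le> p" using n by (simp add: p_def)
        have pq: "real q \<le> real p" by (simp add: p_def)
        have "(3 * c + M) / e < real p" using q pq by linarith
        then have "(3 * c + M) < e * real p" using e by (simp add: divide_less_eq mult.commute)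
        then have err: "(3 * c + M) / real p < e" using p1 by (simp add: divide_less_eq mult.commute)
        have "2 * c - (3 * c + M) / real p \<le> f (p^2, p^3)"
          using mainbound[OF sp assms(2) r My p1 zy] by (simp add: f_def a_def)
        also have "\<dots> \<le> (SUP kl\<in>{n..} \<times> {n..}. f kl)"
        proof (rule cSUP_upper[OF _ bdd])
          have "n \<le> p" by (simp add: p_def)
          moreover have "p \<le> p^2" using p1 by (simp add: power2_eq_square)
          moreover have "p \<le> p^3" using p1 by (simp add: power3_eq_cube)
          ultimately show "(p^2, p^3) \<in> {n..} \<times> {n..}" by auto
        qed
        finally show "2 * c \<le> (SUP kl\<in>{n..} \<times> {n..}. f kl) + e" using err by linarith
      qed
    qed
  qed
qed

end
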